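(* Assume the standing conventions of the context. (i) If $m'=m+1$, $Z'$ is regular and $D_Z=\{Z'\}$, then $D_{Z'}=\{Z\}$. (ii) If $m'=m$, $Z$ is regular and $D_{Z'}=\{Z\}$, then $D_Z=\{Z'\}$.
   Context: A symbol is an array $\Lambda=\binom{a'_1,\ldots,a'_{m_1}}{b'_1,\ldots,b'_{m_2}}$ of two strictly decreasing finite sequences of nonnegative integers (top row, bottom row); its defect is $\mathrm{def}(\Lambda)=m_1-m_2$. Standing assumptions: $Z=\binom{a_1,\ldots,a_{m+1}}{b_1,\ldots,b_m}$ is a special symbol of defect $1$, i.e. $a_1\ge b_1\ge a_2\ge b_2\ge\cdots\ge b_m\ge a_{m+1}$; $Z'=\binom{c_1,\ldots,c_{m'}}{d_1,\ldots,d_{m'}}$ is a special symbol of defect $0$, i.e. $c_1\ge d_1\ge c_2\ge d_2\ge\cdots\ge c_{m'}\ge d_{m'}$; and $m'\in\{m,m+1\}$. For a symbol $Y$, $Y_{\mathrm I}$ is the set of entries of $Y$ occurring in exactly one row; $Y$ is regular if no entry occurs in both rows. For $M\subset Z_{\mathrm I}$, $\Lambda_M$ is the symbol obtained from $Z$ by moving every entry of $M$ to the other row (rows re-sorted decreasingly); for $N\subset Z'_{\mathrm I}$, $\Lambda_N$ is obtained from $Z'$ in the same way. $\overline{\mathcal S}_Z=\{\Lambda_M: M\subset Z_{\mathrm I}\}$, $\overline{\mathcal S}_{Z'}=\{\Lambda_N:N\subset Z'_{\mathrm I}\}$; $\mathcal S_{Z,1}$ (resp. $\mathcal S_{Z',0}$)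 is the set of elements of $\overline{\mathcal S}_Z$ of defect $1$ (resp. of $\overline{\mathcal S}_{Z'}$ of defect $0$). Relation $\overline{\mathcal B}^+_{Z,Z'}\subset\overline{\mathcal S}_Z\times\overline{\mathcal S}_{Z'}$: for $\Lambda=\binom{a'_1,\ldots,a'_{m_1}}{b'_1,\ldots,b'_{m_2}}\in\overline{\mathcal S}_Z$ and $\Lambda'=\binom{c'_1,\ldots,c'_{m'_1}}{d'_1,\ldots,d'_{m'_2}}\in\overline{\mathcal S}_{Z'}$, $(\Lambda,\Lambda')\in\overline{\mathcal B}^+_{Z,Z'}$ iff $\mathrm{def}(\Lambda')=1-\mathrm{def}(\Lambda)$ and: if $m'=m$, $a'_i>d'_i\ge a'_{i+1}$ for $1\le i\le m'_2$ and $b'_{i-1}>c'_i\ge b'_i$ for $1\le i\le m'_1$; if $m'=m+1$, $a'_i\ge d'_i>a'_{i+1}$ for $1\le i\le m'_2$ and $b'_{i-1}\ge c'_i>b'_i$ for $1\le i\le m'_1$; here $b'_0=+\infty$ and nonexistent entries $a'_j,b'_j$ beyond the row lengths are $-\infty$. Then $\mathcal D_{Z,Z'}=\overline{\mathcal B}^+_{Z,Z'}\cap(\mathcal S_{Z,1}\times\mathcal S_{Z',0})$, $D_Z=\{\Lambda'\mid (Z,\Lambda')\in\mathcal D_{Z,Z'}\}$ and $D_{Z'}=\{\Lambda\mid(\Lambda,Z')\in\mathcal D_{Z,Z'}\}$. *)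

theory Defs
  imports Main "HOL-Library.Extended_Real"
begin

text \<open>A symbol is a pair (top row, bottom row) of strictly decreasing lists of naturals.\<close>
type_synonym symbol = "nat list \<times> nat list"

definition is_symbol :: "symbol \<Rightarrow> bool" where
  "is_symbol Y \<longleftrightarrow> sorted_wrt (>) (fst Y) \<and> sorted_wrt (>) (snd Y)"

definition defect :: "symbol \<Rightarrow> int" where
  "defect Y = int (length (fst Y)) - int (length (snd Y))"

definition row_of :: "nat set \<Rightarrow> nat list" where
  "row_of S = rev (sorted_list_of_set S)"

definition singles :: "symbol \<Rightarrow> nat set" where
  "singles Y = (set (fst Y) - set (snd Y)) \<union> (set (snd Y) - set (fst Y))"

definition regular :: "symbol \<Rightarrow> bool" where
  "regular Y \<longleftrightarrow> set (fst Y) \<inter> set (snd Y) = {}"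

definition move :: "symbol \<Rightarrow> nat set \<Rightarrow> symbol" where
  "move Y M = (row_of ((set (fst Y) - M) \<union> (set (snd Y) \<inter> M)),
               row_of ((set (snd Y) - M) \<union> (set (fst Y) \<inter> M)))"

definition Sbar :: "symbol \<Rightarrow> symbol set" where
  "Sbar Y = {move Y M | M. M \<subseteq> singles Y}"

definition Sdef :: "symbol \<Rightarrow> int \<Rightarrow> symbol set" where
  "Sdef Y k = {L \<in> Sbar Y. defect L = k}"

definition special1 :: "symbol \<Rightarrow> nat \<Rightarrow> bool" where
  "special1 Z m \<longleftrightarrow> is_symbol Z \<and> length (fst Z) = m + 1 \<and> length (snd Z) = m \<and>
     (\<forall>i<m. fst Z ! i \<ge> snd Z ! i \<and> snd Z ! i \<ge> fst Z ! (i + 1))"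

definition special0 :: "symbol \<Rightarrow> nat \<Rightarrow> bool" where
  "special0 Z m' \<longleftrightarrow> is_symbol Z \<and> length (fst Z) = m' \<and> length (snd Z) = m' \<and>
     (\<forall>i<m'. fst Z ! i \<ge> snd Z ! i) \<and> (\<forall>i. i + 1 < m' \<longrightarrow> snd Z ! i \<ge> fst Z ! (i + 1))"

text \<open>1-based entry of a row; index 0 gives +\<infinity> (b'_0), indices beyond the length give -\<infinity>.\<close>
definition ent :: "nat list \<Rightarrow> nat \<Rightarrow> ereal" where
  "ent xs i = (if i = 0 then PInfty else if i \<le> length xs then ereal (real (xs ! (i - 1))) else MInfty)"

definition Bplus :: "nat \<Rightarrow> nat \<Rightarrow> symbol \<Rightarrow> symbol \<Rightarrow> bool" where
  "Bplus m m' L L' \<longleftrightarrow> defect L' = 1 - defect L \<and>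
     (let a = fst L; b = snd L; c = fst L'; d = snd L' in
      if m' = m then
        (\<forall>i\<in>{1..length d}. ent a i > ent d i \<and> ent d i \<ge> ent a (i + 1)) \<and>
        (\<forall>i\<in>{1..length c}. ent b (i - 1) > ent c i \<and> ent c i \<ge> ent b i)
      else if m' = m + 1 then
        (\<forall>i\<in>{1..length d}. ent a i \<ge> ent d i \<and> ent d i > ent a (i + 1)) \<and>
        (\<forall>i\<in>{1..length c}. ent b (i - 1) \<ge> ent c i \<and> ent c i > ent b i)
      else False)"

definition BplusRel :: "symbol \<Rightarrow> symbol \<Rightarrow> nat \<Rightarrow> nat \<Rightarrow> (symbol \<times> symbol) set" where
  "BplusRel Z Z' m m' = {(L, L'). L \<in> Sbar Z \<and> L' \<in> Sbar Z' \<and> Bplus m m' L L'}"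

definition Dset :: "symbol \<Rightarrow> symbol \<Rightarrow> nat \<Rightarrow> nat \<Rightarrow> (symbol \<times> symbol) set" where
  "Dset Z Z' m m' = BplusRel Z Z' m m' \<inter> (Sdef Z 1 \<times> Sdef Z' 0)"

definition D_Z :: "symbol \<Rightarrow> symbol \<Rightarrow> nat \<Rightarrow> nat \<Rightarrow> symbol set" where
  "D_Z Z Z' m m' = {L'. (Z, L') \<in> Dset Z Z' m m'}"

definition D_Z' :: "symbol \<Rightarrow> symbol \<Rightarrow> nat \<Rightarrow> nat \<Rightarrow> symbol set" where
  "D_Z' Z Z' m m' = {L. (L, Z') \<in> Dset Z Z' m m'}"

end

theory Submission
  imports Defs
begin


lemma row_of_set: "sorted_wrt (>) xs \<Longrightarrow> row_of (set xs) = xs"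
  unfolding row_of_def
  by (metis distinct_rev rev_rev_ident set_rev sorted_list_of_set.idem_if_sorted_distinct
     sorted_wrt_rev strict_sorted_iff subset_refl)

lemma row_of_props: "finite S \<Longrightarrow> set (row_of S) = S \<and> length (row_of S) = card S \<and> sorted_wrt (>) (row_of S)"
  unfolding row_of_def by (simp add: sorted_wrt_rev)

lemma ball_1n: "(\<forall>i\<in>{1..n}. P i) = (\<forall>k<n. P (Suc k))"
  by (auto simp: Ball_def) (metis Suc_pred' not_less_eq_eq le_zero_eq less_Suc_eq_le Suc_le_eq)

lemma ent_Suc_ge: "ereal (real y) \<le> ent xs (Suc k) \<longleftrightarrow> k < length xs \<and> y \<le> xs!k"
  by (simp add: ent_def)
lemma ent_Suc_gt: "ereal (real y) < ent xs (Suc k) \<longleftrightarrow> k < length xs \<and> y < xs!k"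
  by (simp add: ent_def)
lemma ent_Suc_le: "ent xs (Suc k) \<le> ereal (real y) \<longleftrightarrow> (k < length xs \<longrightarrow> xs!k \<le> y)"
  by (simp add: ent_def)
lemma ent_Suc_lt: "ent xs (Suc k) < ereal (real y) \<longleftrightarrow> (k < length xs \<longrightarrow> xs!k < y)"
  by (simp add: ent_def)
lemma ent_k_ge: "ereal (real y) \<le> ent xs k \<longleftrightarrow> k = 0 \<or> (k \<le> length xs \<and> y \<le> xs!(k-1))"
  by (cases k) (auto simp add: ent_def)
lemma ent_k_gt: "ereal (real y) < ent xs k \<longleftrightarrow> k = 0 \<or> (k \<le> length xs \<and> y < xs!(k-1))"
  by (cases k) (auto simp add: ent_def)
lemma zero_or: "((k::nat) = 0 \<or> P) = (0 < k \<longrightarrow> P)" by auto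

lemma ent_fin: "k < length xs \<Longrightarrow> ent xs (Suc k) = ereal (real (xs!k))"
  by (simp add: ent_def)

lemma Bplus_succ:
  assumes "m' = Suc m"
  shows "Bplus m m' L L' \<longleftrightarrow> defect L' = 1 - defect L \<and>
   (\<forall>k<length (snd L'). k < length (fst L) \<and> snd L'!k \<le> fst L!k \<and> (Suc k < length (fst L) \<longrightarrow> fst L!(Suc k) < snd L'!k)) \<and>
   (\<forall>k<length (fst L'). (0<k \<longrightarrow> k \<le> length (snd L) \<and> fst L'!k \<le> snd L!(k-1)) \<and> (k < length (snd L) \<longrightarrow> snd L!k < fst L'!k))"
proof -
  have 1: "(\<forall>k<length d. ent a (Suc k) \<ge> ent d (Suc k) \<and> ent d (Suc k) > ent a (Suc (Suc k))) \<longleftrightarrow>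
     (\<forall>k<length d. k < length a \<and> d!k \<le> a!k \<and> (Suc k < length a \<longrightarrow> a!(Suc k) < d!k))" for a d :: "nat list"
    by (simp add: ent_fin ent_Suc_ge ent_Suc_lt cong: all_cong)
  have 2: "(\<forall>k<length c. ent b k \<ge> ent c (Suc k) \<and> ent c (Suc k) > ent b (Suc k)) \<longleftrightarrow>
     (\<forall>k<length c. (0<k \<longrightarrow> k \<le> length b \<and> c!k \<le> b!(k-1)) \<and> (k < length b \<longrightarrow> b!k < c!k))" for b c :: "nat list"
    apply (simp add: ent_fin ent_k_ge ent_Suc_lt cong: all_cong) by (simp add: zero_or)
  show ?thesis using assms unfolding Bplus_def Let_def ball_1n by (simp add: 1 2)
qed

lemma Bplus_eq:
  assumes "m' = m"
  shows "Bplus m m' L L' \<longleftrightarrow> defect L' = 1 - defect L \<and>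
   (\<forall>k<length (snd L'). k < length (fst L) \<and> snd L'!k < fst L!k \<and> (Suc k < length (fst L) \<longrightarrow> fst L!(Suc k) \<le> snd L'!k)) \<and>
   (\<forall>k<length (fst L'). (0<k \<longrightarrow> k \<le> length (snd L) \<and> fst L'!k < snd L!(k-1)) \<and> (k < length (snd L) \<longrightarrow> snd L!k \<le> fst L'!k))"
proof -
  have 1: "(\<forall>k<length d. ent a (Suc k) > ent d (Suc k) \<and> ent d (Suc k) \<ge> ent a (Suc (Suc k))) \<longleftrightarrow>
     (\<forall>k<length d. k < length a \<and> d!k < a!k \<and> (Suc k < length a \<longrightarrow> a!(Suc k) \<le> d!k))" for a d :: "nat list"
    by (simp add: ent_fin ent_Suc_gt ent_Suc_le cong: all_cong)
  have 2: "(\<forall>k<length c. ent b k > ent c (Suc k) \<and> ent c (Suc k) \<ge> ent b (Suc k)) \<longleftrightarrow>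
     (\<forall>k<length c. (0<k \<longrightarrow> k \<le> length b \<and> c!k < b!(k-1)) \<and> (k < length b \<longrightarrow> b!k \<le> c!k))" for b c :: "nat list"
    apply (simp add: ent_fin ent_k_gt ent_Suc_le cong: all_cong) by (simp add: zero_or)
  show ?thesis using assms unfolding Bplus_def Let_def ball_1n by (simp add: 1 2)
qed


lemma dec_from_step:
  assumes "\<forall>k. Suc k < N \<longrightarrow> e (Suc k) < (e k :: nat)" "i < j" "j < N"
  shows "e j < e i"
  using assms(2,3)
proof (induction j)
  case 0 then show ?case by simp
next
  case (Suc j)
  then show ?case using assms(1)
    by (metis Suc_lessD less_Suc_eq order.strict_trans)
qed

lemma window:
  assumes "\<forall>k. Suc k < N \<longrightarrow> e (Suc k) < (e k :: nat)" "j < N" "lo \<le> e j" "e j < hi"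
    "0 < p \<longrightarrow> hi \<le> e (p - 1)" "p < N" "Suc (Suc p) < N \<longrightarrow> e (Suc (Suc p)) < lo"
  shows "j = p \<or> j = Suc p"
proof (rule ccontr)
  assume n: "\<not> (j = p \<or> j = Suc p)"
  show False
  proof (cases "j < p")
    case True
    have pN: "p - 1 < N" using assms(6) by arith
    have "e (p - 1) \<le> e j"
    proof (cases "j = p - 1")
      case True then show ?thesis by simp
    next
      case False
      then have "j < p - 1" using \<open>j < p\<close> by arith
      then show ?thesis using dec_from_step[OF assms(1) _ pN] by fastforce
    qed
    moreover have "hi \<le> e (p - 1)" using assms(5) True by simp
    ultimately show False using assms(4) by simp
  next
    case False
    then have sp: "Suc (Suc p) \<le> j" using n by auto
    then have spN: "Suc (Suc p) < N" using assms(2) by simp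
    have "e j \<le> e (Suc (Suc p))"
    proof (cases "j = Suc (Suc p)")
      case True then show ?thesis by simp
    next
      case False
      then have "Suc (Suc p) < j" using sp by simp
      then show ?thesis using dec_from_step[OF assms(1) _ assms(2)] by fastforce
    qed
    then show False using assms(3,7) spN by simp
  qed
qed


lemma uniq:
  assumes disj: "set T \<inter> set S = {}" and l1: "length S \<le> length T" and l2: "length T \<le> Suc (length S)"
    and T0: "0 < length T \<Longrightarrow> T!0 = e 0"
    and Ti: "\<forall>i. 0 < i \<and> i < length T \<longrightarrow> T!i = e (2*i - 1) \<or> T!i = e (2*i)"
    and Si: "\<forall>i<length S. S!i = e (2*i) \<or> S!i = e (Suc (2*i))"
  shows "(i < length T \<longrightarrow> T!i = e (2*i)) \<and> (i < length S \<longrightarrow> S!i = e (Suc (2*i)))"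
proof (induction i)
  case 0
  have a: "0 < length T \<longrightarrow> T!0 = e 0" using T0 by auto
  have "0 < length S \<longrightarrow> S!0 = e 1"
  proof
    assume s: "0 < length S"
    then have t: "0 < length T" using l1 by auto
    have "S!0 \<noteq> T!0" using disj s t by (metis disjoint_iff nth_mem)
    moreover have "S!0 = e 0 \<or> S!0 = e 1" using Si[rule_format, of 0] s by simp
    ultimately show "S!0 = e 1" using a t by auto
  qed
  then show ?case using a by simp
next
  case (Suc i)
  have a: "Suc i < length T \<longrightarrow> T!(Suc i) = e (2 * Suc i)"
  proof
    assume t: "Suc i < length T"
    then have s: "i < length S" using l2 by auto
    have "T!(Suc i) \<noteq> S!i" using disj s t by (metis disjoint_iff nth_mem)
    moreover have "S!i = e (2*Suc i - 1)" using Suc.IH s by simp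
    moreover have "T!(Suc i) = e (2*Suc i - 1) \<or> T!(Suc i) = e (2*Suc i)" using Ti[rule_format, of "Suc i"] t by simp
    ultimately show "T!(Suc i) = e (2 * Suc i)" by metis
  qed
  have "Suc i < length S \<longrightarrow> S!(Suc i) = e (Suc (2 * Suc i))"
  proof
    assume s: "Suc i < length S"
    then have t: "Suc i < length T" using l1 by auto
    have "S!(Suc i) \<noteq> T!(Suc i)" using disj s t by (metis disjoint_iff nth_mem)
    moreover have "S!(Suc i) = e (2*Suc i) \<or> S!(Suc i) = e (Suc (2*Suc i))" using Si[rule_format, of "Suc i"] s by simp
    ultimately show "S!(Suc i) = e (Suc (2 * Suc i))" using a t by auto
  qed
  then show ?case using a by simp
qed


definition merge :: "nat list \<Rightarrow> nat list \<Rightarrow> nat \<Rightarrow> nat" where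
  "merge A B k = (if even k then A!(k div 2) else B!(k div 2))"

lemma merge_even[simp]: "merge A B (2*k) = A!k" by (simp add: merge_def)
lemma merge_odd[simp]: "merge A B (Suc (2*k)) = B!k" by (simp add: merge_def)

lemma merge_image:
  assumes "length B \<le> length A" "length A \<le> Suc (length B)"
  shows "merge A B ` {..<length A + length B} = set A \<union> set B"
proof (rule set_eqI, rule iffI)
  fix x assume "x \<in> merge A B ` {..<length A + length B}"
  then obtain k where k: "k < length A + length B" "x = merge A B k" by blast
  show "x \<in> set A \<union> set B"
  proof (cases "even k")
    case True
    then obtain q where q: "k = 2*q" by (rule evenE)
    then have "q < length A" using k assms by linarith
    moreover have "x = A!q" using k q by simp
    ultimately show ?thesis by (metis UnI1 nth_mem)
  next
    case False
    then obtain q where "k = 2*q+1" by (rule oddE)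
    then have q: "k = Suc (2*q)" by simp
    then have "q < length B" using k assms by linarith
    moreover have "x = B!q" using k q by simp
    ultimately show ?thesis by (metis UnI2 nth_mem)
  qed
next
  fix x assume "x \<in> set A \<union> set B"
  then show "x \<in> merge A B ` {..<length A + length B}"
  proof
    assume "x \<in> set A"
    then obtain q where q: "q < length A" "x = A!q" by (metis in_set_conv_nth)
    then have "x = merge A B (2*q)" "2*q < length A + length B" using assms by simp_all
    then show ?thesis by (metis image_eqI lessThan_iff)
  next
    assume "x \<in> set B"
    then obtain q where q: "q < length B" "x = B!q" by (metis in_set_conv_nth)
    then have "x = merge A B (Suc (2*q))" "Suc (2*q) < length A + length B" using assms by simp_all
    then show ?thesis by (metis image_eqI lessThan_iff)
  qed
qed

lemma merge_disj:
  assumes "\<forall>k. Suc k < length A + length B \<longrightarrow> merge A B (Suc k) < merge A B k"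
    "length B \<le> length A" "length A \<le> Suc (length B)"
  shows "set A \<inter> set B = {}"
proof (rule ccontr)
  assume "set A \<inter> set B \<noteq> {}"
  then obtain x where "x \<in> set A" "x \<in> set B" by auto
  then obtain i j where ij: "i < length A" "j < length B" "A!i = B!j"
    by (metis in_set_conv_nth)
  have "merge A B (2*i) \<noteq> merge A B (Suc (2*j))"
  proof (cases "2*i < Suc (2*j)")
    case True
    then show ?thesis using dec_from_step[OF assms(1), of "2*i" "Suc (2*j)"] ij assms by auto
  next
    case False
    then have "Suc (2*j) < 2*i" by presburger
    then show ?thesis using dec_from_step[OF assms(1), of "Suc (2*j)" "2*i"] ij assms by auto
  qed
  then show False using ij by simp
qed

lemma sorted_upd:
  assumes "sorted_wrt (>) P" "i < length P" "0 < i \<longrightarrow> y < P!(i-1)" "Suc i < length P \<longrightarrow> P!(Suc i) < (y::nat)"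
  shows "sorted_wrt (>) (P[i:=y])"
proof -
  have tr: "transp ((>) :: nat \<Rightarrow> nat \<Rightarrow> bool)" by (auto simp: transp_def)
  have "\<forall>k. Suc k < length P \<longrightarrow> P!(Suc k) < P!k"
    using assms(1) by (simp add: sorted_wrt_iff_nth_Suc_transp[OF tr])
  then show ?thesis using assms(2-4)
    by (auto simp: sorted_wrt_iff_nth_Suc_transp[OF tr] nth_list_update)
qed

lemma sorted_distinct: "sorted_wrt (>) (xs::nat list) \<Longrightarrow> distinct xs"
  by (induction xs) auto



lemma merge_ss2[simp]: "merge A B (Suc (Suc (2*k))) = A!(Suc k)"
  using merge_even[of A B "Suc k"] by simp
lemma merge_ss3[simp]: "merge A B (Suc (Suc (Suc (2*k)))) = B!(Suc k)"
  using merge_odd[of A B "Suc k"] by simp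

lemma move_props:
  assumes "set P \<inter> set Q = {}" "distinct P" "distinct Q"
  shows "set (fst (move (P,Q) M)) \<union> set (snd (move (P,Q) M)) = set P \<union> set Q"
    "set (fst (move (P,Q) M)) \<inter> set (snd (move (P,Q) M)) = {}"
    "length (fst (move (P,Q) M)) + length (snd (move (P,Q) M)) = length P + length Q"
    "sorted_wrt (>) (fst (move (P,Q) M))" "sorted_wrt (>) (snd (move (P,Q) M))"
proof -
  define X where "X = (set P - M) \<union> (set Q \<inter> M)"
  define Y where "Y = (set Q - M) \<union> (set P \<inter> M)"
  have mv: "move (P,Q) M = (row_of X, row_of Y)" unfolding move_def X_def Y_def by simp
  have fX: "finite X" "finite Y" unfolding X_def Y_def by auto
  have XY: "X \<union> Y = set P \<union> set Q" "X \<inter> Y = {}" using assms(1) unfolding X_def Y_def by auto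
  show "set (fst (move (P,Q) M)) \<union> set (snd (move (P,Q) M)) = set P \<union> set Q"
    "set (fst (move (P,Q) M)) \<inter> set (snd (move (P,Q) M)) = {}"
    "sorted_wrt (>) (fst (move (P,Q) M))" "sorted_wrt (>) (snd (move (P,Q) M))"
    using row_of_props[OF fX(1)] row_of_props[OF fX(2)] XY mv by auto
  have "card X + card Y = card (set P \<union> set Q)" using card_Un_disjoint[OF fX XY(2)] XY(1) by simp
  also have "\<dots> = length P + length Q" using card_Un_disjoint[OF _ _ assms(1)] assms(2,3)
    by (simp add: distinct_card)
  finally show "length (fst (move (P,Q) M)) + length (snd (move (P,Q) M)) = length P + length Q"
    using row_of_props[OF fX(1)] row_of_props[OF fX(2)] mv by simp
qed

lemma move_swap:
  assumes "set P \<inter> set Q = {}" "sorted_wrt (>) P" "sorted_wrt (>) Q" "i < length P" "j < length Q"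
    "sorted_wrt (>) (P[i := Q!j])" "sorted_wrt (>) (Q[j := P!i])"
  shows "(P[i := Q!j], Q[j := P!i]) \<in> Sbar (P,Q)"
proof -
  have dP: "distinct P" by (rule sorted_distinct[OF assms(2)])
  have dQ: "distinct Q" by (rule sorted_distinct[OF assms(3)])
  have p1: "P!i \<in> set P" using assms(4) by simp
  have q1: "Q!j \<in> set Q" using assms(5) by simp
  have p2: "P!i \<notin> set Q" using p1 assms(1) by (metis disjoint_iff)
  have q2: "Q!j \<notin> set P" using q1 assms(1) by (metis disjoint_iff)
  note pi = p1 p2 and qj = q1 q2
  have s1: "set (P[i := Q!j]) = (set P - {P!i, Q!j}) \<union> (set Q \<inter> {P!i, Q!j})"
    using set_update_distinct[OF dP assms(4)] pi qj by auto
  have s2: "set (Q[j := P!i]) = (set Q - {P!i, Q!j}) \<union> (set P \<inter> {P!i, Q!j})"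
    using set_update_distinct[OF dQ assms(5)] pi qj by auto
  have mv: "move (P,Q) {P!i, Q!j} = (P[i := Q!j], Q[j := P!i])"
    unfolding move_def using s1 s2 row_of_set[OF assms(6)] row_of_set[OF assms(7)] by simp
  have sg: "{P!i, Q!j} \<subseteq> singles (P,Q)" unfolding singles_def using pi qj by auto
  show ?thesis unfolding Sbar_def mem_Collect_eq
    by (rule exI[of _ "{P!i, Q!j}"]) (simp only: mv sg simp_thms)
qed



lemma part1:
  fixes A B C D :: "nat list"
  assumes Zd: "Z = (A,B)" and Z'd: "Z' = (C,D)"
    and s1: "special1 Z m" and s0: "special0 Z' (Suc m)" and reg: "regular Z'"
    and DZ: "D_Z Z Z' m (Suc m) = {Z'}"
  shows "D_Z' Z Z' m (Suc m) = {Z}"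
proof -
  have lA: "length A = Suc m" and lB: "length B = m" and sA: "sorted_wrt (>) A" and sB: "sorted_wrt (>) B"
    and wAB: "\<forall>i<m. B!i \<le> A!i \<and> A!(Suc i) \<le> B!i"
    using s1 unfolding Zd special1_def is_symbol_def by auto
  have lC: "length C = Suc m" and lD: "length D = Suc m" and sC: "sorted_wrt (>) C" and sD: "sorted_wrt (>) D"
    and wCD1: "\<forall>i<Suc m. D!i \<le> C!i" and wCD2: "\<forall>i. Suc i < Suc m \<longrightarrow> C!(Suc i) \<le> D!i"
    using s0 unfolding Z'd special0_def is_symbol_def by auto
  have disjCD: "set C \<inter> set D = {}" using reg unfolding Z'd regular_def by simp
  have sCD1: "D!i < C!i" if "i < Suc m" for i
  proof -
    have "C!i \<in> set C" "D!i \<in> set D" using that lC lD by simp_all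
    then have "C!i \<noteq> D!i" using disjCD by (metis disjoint_iff)
    then show ?thesis using wCD1 that by (simp add: order_less_le)
  qed
  have sCD2: "C!(Suc i) < D!i" if "i < m" for i
  proof -
    have "C!(Suc i) \<in> set C" "D!i \<in> set D" using that lC lD by simp_all
    then have "C!(Suc i) \<noteq> D!i" using disjCD by (metis disjoint_iff)
    then show ?thesis using wCD2 that by (simp add: order_less_le)
  qed
  have mem: "(Z,Z') \<in> Dset Z Z' m (Suc m)" using DZ unfolding D_Z_def by (metis mem_Collect_eq singletonI)
  then have ZS: "Z \<in> Sbar Z" "defect Z = 1" and BP: "Bplus m (Suc m) Z Z'"
    unfolding Dset_def BplusRel_def Sdef_def by auto
  from BP have F1: "\<forall>k<Suc m. D!k \<le> A!k \<and> (k < m \<longrightarrow> A!(Suc k) < D!k)"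
     and F2: "\<forall>k<Suc m. (0<k \<longrightarrow> C!k \<le> B!(k-1)) \<and> (k<m \<longrightarrow> B!k < C!k)"
    unfolding Bplus_succ[OF refl] Zd Z'd fst_conv snd_conv lA lB lC lD by auto
  have memDZ: "L' = Z'" if "L' \<in> Sbar Z'" "defect L' = 0" "Bplus m (Suc m) Z L'" for L'
  proof -
    have "L' \<in> D_Z Z Z' m (Suc m)" unfolding D_Z_def Dset_def BplusRel_def Sdef_def
      using that ZS by simp
    then show ?thesis using DZ by simp
  qed
  have swap1: "\<not> (C!i \<le> A!i \<and> (i<m \<longrightarrow> B!i < D!i))" if i: "i < Suc m" for i
  proof
    assume h: "C!i \<le> A!i \<and> (i<m \<longrightarrow> B!i < D!i)"
    define C' where "C' = C[i := D!i]"
    define D' where "D' = D[i := C!i]"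
    have sC': "sorted_wrt (>) C'" unfolding C'_def
    proof (rule sorted_upd[OF sC])
      show "i < length C" using i lC by simp
      show "0 < i \<longrightarrow> D!i < C!(i-1)" using sCD1[of i] sCD1[of "i-1"] wCD2[rule_format, of "i-1"] i
        by (cases i) auto
      show "Suc i < length C \<longrightarrow> C!(Suc i) < D!i" using sCD2[of i] lC by simp
    qed
    have sD': "sorted_wrt (>) D'" unfolding D'_def
    proof (rule sorted_upd[OF sD])
      show "i < length D" using i lD by simp
      show "0 < i \<longrightarrow> C!i < D!(i-1)" using sCD2[of "i-1"] i by (cases i) auto
      show "Suc i < length D \<longrightarrow> D!(Suc i) < C!i" using sCD1[of "Suc i"] sCD2[of i] sCD1[of i] lD i by auto
    qed
    have inS: "(C', D') \<in> Sbar Z'" unfolding Z'd C'_def D'_def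
      using move_swap[OF disjCD sC sD _ _ sC'[unfolded C'_def] sD'[unfolded D'_def]] i lC lD by simp
    have lC': "length C' = Suc m" "length D' = Suc m" unfolding C'_def D'_def using lC lD by simp_all
    have df: "defect (C',D') = 0" unfolding defect_def using lC' by simp
    have BP': "Bplus m (Suc m) Z (C',D')"
      unfolding Bplus_succ[OF refl] Zd fst_conv snd_conv lA lB lC'
    proof (intro conjI allI impI)
      show "defect (C', D') = 1 - defect (A, B)" using df ZS Zd by simp
      fix k assume k: "k < Suc m"
      show "k < Suc m" using k .
      show "D'!k \<le> A!k" using F1[rule_format, OF k] k h unfolding D'_def by (cases "k = i") (auto simp: lD)
      show "Suc k < Suc m \<Longrightarrow> A!(Suc k) < D'!k"
        using F1[rule_format, OF k] k sCD1[of k] unfolding D'_def by (cases "k = i") (auto simp: lD)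
      show "0 < k \<Longrightarrow> k \<le> m" using k by simp
      show "0 < k \<Longrightarrow> C'!k \<le> B!(k-1)"
        using F2[rule_format, OF k] k sCD1[of k] unfolding C'_def by (cases "k = i") (auto simp: lC)
      show "k < m \<Longrightarrow> B!k < C'!k"
        using F2[rule_format, OF k] k h unfolding C'_def by (cases "k = i") (auto simp: lC)
    qed
    have "(C',D') = Z'" using memDZ[OF inS df BP'] .
    then have "C' = C" unfolding Z'd by simp
    then have "D!i = C!i" unfolding C'_def by (metis i lC nth_list_update_eq)
    then show False using sCD1[OF i] by simp
  qed
  have swap2: "\<not> (D!i \<le> B!i \<and> A!(Suc i) < C!(Suc i))" if i: "i < m" for i
  proof
    assume h: "D!i \<le> B!i \<and> A!(Suc i) < C!(Suc i)"
    define C' where "C' = C[Suc i := D!i]"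
    define D' where "D' = D[i := C!(Suc i)]"
    have sC': "sorted_wrt (>) C'" unfolding C'_def
    proof (rule sorted_upd[OF sC])
      show "Suc i < length C" using i lC by simp
      show "0 < Suc i \<longrightarrow> D!i < C!(Suc i - 1)" using sCD1[of i] i by simp
      show "Suc (Suc i) < length C \<longrightarrow> C!(Suc (Suc i)) < D!i"
        using sCD2[of "Suc i"] sCD1[of "Suc i"] sCD2[of i] lC i by auto
    qed
    have sD': "sorted_wrt (>) D'" unfolding D'_def
    proof (rule sorted_upd[OF sD])
      show "i < length D" using i lD by simp
      show "0 < i \<longrightarrow> C!(Suc i) < D!(i-1)"
        using sCD2[of i] sCD1[of i] sCD2[of "i-1"] i by (cases i) auto
      show "Suc i < length D \<longrightarrow> D!(Suc i) < C!(Suc i)" using sCD1[of "Suc i"] lD i by auto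
    qed
    have inS: "(C', D') \<in> Sbar Z'" unfolding Z'd C'_def D'_def
      using move_swap[OF disjCD sC sD _ _ sC'[unfolded C'_def] sD'[unfolded D'_def]] i lC lD by simp
    have lC': "length C' = Suc m" "length D' = Suc m" unfolding C'_def D'_def using lC lD by simp_all
    have df: "defect (C',D') = 0" unfolding defect_def using lC' by simp
    have BP': "Bplus m (Suc m) Z (C',D')"
      unfolding Bplus_succ[OF refl] Zd fst_conv snd_conv lA lB lC'
    proof (intro conjI allI impI)
      show "defect (C', D') = 1 - defect (A, B)" using df ZS Zd by simp
      fix k assume k: "k < Suc m"
      show "k < Suc m" using k .
      show "D'!k \<le> A!k" using F1[rule_format, OF k] k i sCD2[of k] unfolding D'_def by (cases "k = i") (auto simp: lD)
      show "Suc k < Suc m \<Longrightarrow> A!(Suc k) < D'!k"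
        using F1[rule_format, OF k] k i h unfolding D'_def by (cases "k = i") (auto simp: lD)
      show "0 < k \<Longrightarrow> k \<le> m" using k by simp
      show "0 < k \<Longrightarrow> C'!k \<le> B!(k-1)"
        using F2[rule_format, OF k] k i h unfolding C'_def by (cases "k = Suc i") (auto simp: lC)
      show "k < m \<Longrightarrow> B!k < C'!k"
        using F2[rule_format, OF k] k i sCD2[of "Suc i"] sCD1[of "Suc i"] sCD2[of i] unfolding C'_def
        by (cases "k = Suc i") (auto simp: lC)
    qed
    have "(C',D') = Z'" using memDZ[OF inS df BP'] .
    then have "C' = C" unfolding Z'd by simp
    then have "D!i = C!(Suc i)" unfolding C'_def by (metis i lC Suc_mono nth_list_update_eq)
    then show False using sCD2[OF i] by simp
  qed
  have chain: "j \<le> m \<Longrightarrow> A!(m-j) < C!(m-j)" for j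
  proof (induction j)
    case 0 then show ?case using swap1[of m] by auto
  next
    case (Suc j)
    define i where "i = m - Suc j"
    have i: "i < m" "Suc i = m - j" using Suc.prems unfolding i_def by auto
    have "A!(Suc i) < C!(Suc i)" using Suc i by simp
    then have "B!i < D!i" using swap2[OF i(1)] by auto
    then have "A!i < C!i" using swap1[of i] i by auto
    then show ?case unfolding i_def .
  qed
  have hA: "A!i < C!i" if "i < Suc m" for i using chain[of "m - i"] that by simp
  have hB: "B!i < D!i" if "i < m" for i using swap2[OF that] hA[of "Suc i"] that by auto
  define e where "e = merge A B"
  define N where "N = length A + length B"
  have N: "N = Suc (2*m)" unfolding N_def lA lB by simp
  have step: "\<forall>k. Suc k < N \<longrightarrow> e (Suc k) < e k"
  proof (intro allI impI)
    fix k assume k: "Suc k < N"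
    show "e (Suc k) < e k"
    proof (cases "even k")
      case True
      then obtain q where q: "k = 2*q" by (rule evenE)
      have "q < m" using k q N by simp
      have "e (Suc k) = B!q" "e k = A!q" unfolding e_def q by simp_all
      then show ?thesis using hB[of q] F1[rule_format, of q] \<open>q < m\<close> by force
    next
      case False
      then obtain q where "k = 2*q+1" by (rule oddE)
      then have q: "k = Suc (2*q)" by simp
      have "q < m" using k q N by simp
      have "e (Suc k) = A!(Suc q)" "e k = B!q" unfolding e_def q by simp_all
      then show ?thesis using hA[of "Suc q"] F2[rule_format, of "Suc q"] \<open>q < m\<close> by force
    qed
  qed
  have lAB: "length B \<le> length A" "length A \<le> Suc (length B)" using lA lB by simp_all
  have disjAB: "set A \<inter> set B = {}" using merge_disj[OF step[unfolded e_def N_def] lAB] .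
  have imgE: "e ` {..<N} = set A \<union> set B" unfolding e_def N_def using merge_image[OF lAB] .
  have e1: "e (Suc 0) = B!0" unfolding e_def using merge_odd[of A B 0] by simp
  have memL: "L = Z" if L: "L \<in> D_Z' Z Z' m (Suc m)" for L
  proof -
    have LS: "L \<in> Sbar Z" "defect L = 1" and BL: "Bplus m (Suc m) L Z'"
      using L unfolding D_Z'_def Dset_def BplusRel_def Sdef_def by auto
    obtain M where LM: "L = move (A,B) M" using LS(1) unfolding Sbar_def Zd by auto
    define T where "T = fst L"
    define S where "S = snd L"
    have LTS: "L = (T,S)" unfolding T_def S_def by simp
    have dA: "distinct A" by (rule sorted_distinct[OF sA])
    have dB: "distinct B" by (rule sorted_distinct[OF sB])
    note mp = move_props[OF disjAB dA dB, of M, folded LM, folded T_def S_def]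
    have lT: "length T = Suc m" "length S = m"
      using mp(3) LS(2) lA lB unfolding LTS defect_def by simp_all
    from BL have G1: "\<forall>k<Suc m. D!k \<le> T!k \<and> (k < m \<longrightarrow> T!(Suc k) < D!k)"
      and G2: "\<forall>k<Suc m. (0<k \<longrightarrow> C!k \<le> S!(k-1)) \<and> (k<m \<longrightarrow> S!k < C!k)"
      unfolding Bplus_succ[OF refl] LTS Z'd fst_conv snd_conv lT lC lD by auto
    have inE: "\<exists>j<N. x = e j" if "x \<in> set T \<union> set S" for x
      using that mp(1) imgE by auto
    have T0: "T!0 = e 0" if "0 < length T"
    proof -
      have "T!0 \<in> set T" using that by simp
      then obtain j where j: "j < N" "T!0 = e j" using inE[of "T!0"] by blast
      show ?thesis
      proof (cases "j = 0")
        case True then show ?thesis using j by simp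
      next
        case False
        then have m0: "0 < m" using j N by simp
        have "e j \<le> e (Suc 0)"
          using dec_from_step[OF step, of "Suc 0" j] j False by (cases "j = Suc 0") auto
        then have "T!0 \<le> B!0" using j e1 by simp
        moreover have "B!0 < D!0" using hB[OF m0] .
        moreover have "D!0 \<le> T!0" using G1 by auto
        ultimately show ?thesis by simp
      qed
    qed
    have Ti: "\<forall>i. 0 < i \<and> i < length T \<longrightarrow> T!i = e (2*i - 1) \<or> T!i = e (2*i)"
    proof (intro allI impI)
      fix i assume "0 < i \<and> i < length T"
      then obtain i' where ii: "i = Suc i'" "i' < m" using lT by (cases i) auto
      have "T!i \<in> set T" using ii lT by simp
      then obtain j where j: "j < N" "T!i = e j" using inE[of "T!i"] by blast
      have "j = Suc (2*i') \<or> j = Suc (Suc (2*i'))"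
      proof (rule window[OF step j(1), of "D!i" "D!i'"])
        show "D!i \<le> e j" using G1 ii j by auto
        show "e j < D!i'" using G1[rule_format, of i'] ii j by auto
        show "0 < Suc (2*i') \<longrightarrow> D!i' \<le> e (Suc (2*i') - 1)" using F1[rule_format, of i'] ii unfolding e_def by simp
        show "Suc (2*i') < N" using ii N by simp
        show "Suc (Suc (Suc (2*i'))) < N \<longrightarrow> e (Suc (Suc (Suc (2*i')))) < D!i"
          using hB[of "Suc i'"] ii N unfolding e_def by simp
      qed
      then show "T!i = e (2*i - 1) \<or> T!i = e (2*i)" using j ii by auto
    qed
    have Si: "\<forall>i<length S. S!i = e (2*i) \<or> S!i = e (Suc (2*i))"
    proof (intro allI impI)
      fix i assume ii: "i < length S"
      then have im: "i < m" using lT by simp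
      have "S!i \<in> set S" using ii by simp
      then obtain j where j: "j < N" "S!i = e j" using inE[of "S!i"] by blast
      have "j = 2*i \<or> j = Suc (2*i)"
      proof (rule window[OF step j(1), of "C!(Suc i)" "C!i"])
        show "C!(Suc i) \<le> e j" using G2[rule_format, of "Suc i"] im j by auto
        show "e j < C!i" using G2[rule_format, of i] im j by auto
        show "0 < 2*i \<longrightarrow> C!i \<le> e (2*i - 1)"
        proof
          assume "0 < 2*i"
          then obtain i' where "i = Suc i'" by (cases i) auto
          then show "C!i \<le> e (2*i - 1)" using F2[rule_format, of i] im unfolding e_def by simp
        qed
        show "2*i < N" using im N by simp
        show "Suc (Suc (2*i)) < N \<longrightarrow> e (Suc (Suc (2*i))) < C!(Suc i)"
          using hA[of "Suc i"] im N unfolding e_def by simp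
      qed
      then show "S!i = e (2*i) \<or> S!i = e (Suc (2*i))" using j by auto
    qed
    have U: "(i < length T \<longrightarrow> T!i = e (2*i)) \<and> (i < length S \<longrightarrow> S!i = e (Suc (2*i)))" for i
      by (rule uniq[OF mp(2) _ _ T0 Ti Si]) (simp_all add: lT)
    have "T = A" by (rule nth_equalityI) (use U lT lA in \<open>simp_all add: e_def\<close>)
    moreover have "S = B" by (rule nth_equalityI) (use U lT lB in \<open>simp_all add: e_def\<close>)
    ultimately show ?thesis using LTS Zd by simp
  qed
  show ?thesis
  proof
    show "D_Z' Z Z' m (Suc m) \<subseteq> {Z}" using memL by blast
    show "{Z} \<subseteq> D_Z' Z Z' m (Suc m)" using mem unfolding D_Z'_def by simp
  qed
qed



lemma part2:
  fixes A B C D :: "nat list"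
  assumes Zd: "Z = (A,B)" and Z'd: "Z' = (C,D)"
    and s1: "special1 Z m" and s0: "special0 Z' m" and reg: "regular Z"
    and DZ': "D_Z' Z Z' m m = {Z}"
  shows "D_Z Z Z' m m = {Z'}"
proof -
  have lA: "length A = Suc m" and lB: "length B = m" and sA: "sorted_wrt (>) A" and sB: "sorted_wrt (>) B"
    and wAB: "\<forall>i<m. B!i \<le> A!i \<and> A!(Suc i) \<le> B!i"
    using s1 unfolding Zd special1_def is_symbol_def by auto
  have lC: "length C = m" and lD: "length D = m" and sC: "sorted_wrt (>) C" and sD: "sorted_wrt (>) D"
    and wCD1: "\<forall>i<m. D!i \<le> C!i" and wCD2: "\<forall>i. Suc i < m \<longrightarrow> C!(Suc i) \<le> D!i"
    using s0 unfolding Z'd special0_def is_symbol_def by auto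
  have disjAB: "set A \<inter> set B = {}" using reg unfolding Zd regular_def by simp
  have sAB1: "B!i < A!i" if "i < m" for i
  proof -
    have "A!i \<in> set A" "B!i \<in> set B" using that lA lB by simp_all
    then have "A!i \<noteq> B!i" using disjAB by (metis disjoint_iff)
    then show ?thesis using wAB that by (simp add: order_less_le)
  qed
  have sAB2: "A!(Suc i) < B!i" if "i < m" for i
  proof -
    have "A!(Suc i) \<in> set A" "B!i \<in> set B" using that lA lB by simp_all
    then have "A!(Suc i) \<noteq> B!i" using disjAB by (metis disjoint_iff)
    then show ?thesis using wAB that by (simp add: order_less_le)
  qed
  have mem: "(Z,Z') \<in> Dset Z Z' m m" using DZ' unfolding D_Z'_def by (metis mem_Collect_eq singletonI)
  then have Z'S: "Z' \<in> Sbar Z'" "defect Z' = 0" and BP: "Bplus m m Z Z'"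
    unfolding Dset_def BplusRel_def Sdef_def by auto
  from BP have F1: "\<forall>k<m. D!k < A!k \<and> A!(Suc k) \<le> D!k"
     and F2: "\<forall>k<m. (0<k \<longrightarrow> C!k < B!(k-1)) \<and> B!k \<le> C!k"
    unfolding Bplus_eq[OF refl] Zd Z'd fst_conv snd_conv lA lB lC lD by auto
  have memDZ: "L = Z" if "L \<in> Sbar Z" "defect L = 1" "Bplus m m L Z'" for L
  proof -
    have "L \<in> D_Z' Z Z' m m" unfolding D_Z'_def Dset_def BplusRel_def Sdef_def
      using that Z'S by simp
    then show ?thesis using DZ' by simp
  qed
  have swap1: "\<not> (D!i < B!i \<and> A!i \<le> C!i)" if i: "i < m" for i
  proof
    assume h: "D!i < B!i \<and> A!i \<le> C!i"
    define A' where "A' = A[i := B!i]"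
    define B' where "B' = B[i := A!i]"
    have sA': "sorted_wrt (>) A'" unfolding A'_def
    proof (rule sorted_upd[OF sA])
      show "i < length A" using i lA by simp
      show "0 < i \<longrightarrow> B!i < A!(i-1)" using sAB1[of i] sAB2[of "i-1"] sAB1[of "i-1"] i
        by (cases i) auto
      show "Suc i < length A \<longrightarrow> A!(Suc i) < B!i" using sAB2[of i] i by simp
    qed
    have sB': "sorted_wrt (>) B'" unfolding B'_def
    proof (rule sorted_upd[OF sB])
      show "i < length B" using i lB by simp
      show "0 < i \<longrightarrow> A!i < B!(i-1)" using sAB2[of "i-1"] i by (cases i) auto
      show "Suc i < length B \<longrightarrow> B!(Suc i) < A!i" using sAB1[of "Suc i"] sAB2[of i] sAB1[of i] lB i by auto
    qed
    have inS: "(A', B') \<in> Sbar Z" unfolding Zd A'_def B'_def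
      using move_swap[OF disjAB sA sB _ _ sA'[unfolded A'_def] sB'[unfolded B'_def]] i lA lB by simp
    have lA': "length A' = Suc m" "length B' = m" unfolding A'_def B'_def using lA lB by simp_all
    have df: "defect (A',B') = 1" unfolding defect_def using lA' by simp
    have BP': "Bplus m m (A',B') Z'"
      unfolding Bplus_eq[OF refl] Z'd fst_conv snd_conv lA' lC lD
    proof (intro conjI allI impI)
      show "defect (C, D) = 1 - defect (A', B')" using df Z'S Z'd by simp
      fix k assume k: "k < m"
      show "k < Suc m" using k by simp
      show "D!k < A'!k" using F1[rule_format, OF k] k i h unfolding A'_def by (cases "k = i") (auto simp: lA)
      show "Suc k < Suc m \<Longrightarrow> A'!(Suc k) \<le> D!k"
        using F1[rule_format, OF k] k i F2[rule_format, of "Suc k"] wCD2[rule_format, of k] unfolding A'_def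
        by (cases "Suc k = i") (auto simp: lA)
      show "0 < k \<Longrightarrow> k \<le> m" using k by simp
      show "0 < k \<Longrightarrow> C!k < B'!(k-1)"
        using F2[rule_format, OF k] k i sAB1[of "k-1"] unfolding B'_def by (cases "k - 1 = i") (auto simp: lB)
      show "k < m \<Longrightarrow> B'!k \<le> C!k"
        using F2[rule_format, OF k] k i h unfolding B'_def by (cases "k = i") (auto simp: lB)
    qed
    have "(A',B') = Z" using memDZ[OF inS df BP'] .
    then have "A' = A" unfolding Zd by simp
    then have "B!i = A!i" unfolding A'_def by (metis i lA less_SucI nth_list_update_eq)
    then show False using sAB1[OF i] by simp
  qed
  have swap2: "\<not> (B!i \<le> D!i \<and> (Suc i < m \<longrightarrow> C!(Suc i) < A!(Suc i)))" if i: "i < m" for i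
  proof
    assume h: "B!i \<le> D!i \<and> (Suc i < m \<longrightarrow> C!(Suc i) < A!(Suc i))"
    define A' where "A' = A[Suc i := B!i]"
    define B' where "B' = B[i := A!(Suc i)]"
    have sA': "sorted_wrt (>) A'" unfolding A'_def
    proof (rule sorted_upd[OF sA])
      show "Suc i < length A" using i lA by simp
      show "0 < Suc i \<longrightarrow> B!i < A!(Suc i - 1)" using sAB1[of i] i by simp
      show "Suc (Suc i) < length A \<longrightarrow> A!(Suc (Suc i)) < B!i"
        using sAB2[of "Suc i"] sAB1[of "Suc i"] sAB2[of i] lA i by auto
    qed
    have sB': "sorted_wrt (>) B'" unfolding B'_def
    proof (rule sorted_upd[OF sB])
      show "i < length B" using i lB by simp
      show "0 < i \<longrightarrow> A!(Suc i) < B!(i-1)"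
        using sAB2[of i] sAB1[of i] sAB2[of "i-1"] i by (cases i) auto
      show "Suc i < length B \<longrightarrow> B!(Suc i) < A!(Suc i)" using sAB1[of "Suc i"] lB i by auto
    qed
    have inS: "(A', B') \<in> Sbar Z" unfolding Zd A'_def B'_def
      using move_swap[OF disjAB sA sB _ _ sA'[unfolded A'_def] sB'[unfolded B'_def]] i lA lB by simp
    have lA': "length A' = Suc m" "length B' = m" unfolding A'_def B'_def using lA lB by simp_all
    have df: "defect (A',B') = 1" unfolding defect_def using lA' by simp
    have BP': "Bplus m m (A',B') Z'"
      unfolding Bplus_eq[OF refl] Z'd fst_conv snd_conv lA' lC lD
    proof (intro conjI allI impI)
      show "defect (C, D) = 1 - defect (A', B')" using df Z'S Z'd by simp
      fix k assume k: "k < m"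
      show "k < Suc m" using k by simp
      show "D!k < A'!k" using F1[rule_format, OF k] k i sAB2[of i] unfolding A'_def
        by (cases "k = Suc i") (auto simp: lA)
      show "Suc k < Suc m \<Longrightarrow> A'!(Suc k) \<le> D!k"
        using F1[rule_format, OF k] k i h unfolding A'_def
        by (cases "k = i") (auto simp: lA)
      show "0 < k \<Longrightarrow> k \<le> m" using k by simp
      show "0 < k \<Longrightarrow> C!k < B'!(k-1)"
        using F2[rule_format, OF k] k i h unfolding B'_def by (cases "k - 1 = i") (auto simp: lB)
      show "k < m \<Longrightarrow> B'!k \<le> C!k"
        using F2[rule_format, OF k] k i sAB2[of i] unfolding B'_def by (cases "k = i") (auto simp: lB)
    qed
    have "(A',B') = Z" using memDZ[OF inS df BP'] .
    then have "A' = A" unfolding Zd by simp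
    then have "B!i = A!(Suc i)" unfolding A'_def by (metis i lA Suc_mono nth_list_update_eq)
    then show False using sAB2[OF i] by simp
  qed
  have chain: "j < m \<Longrightarrow> C!(m - Suc j) < A!(m - Suc j) \<and> D!(m - Suc j) < B!(m - Suc j)" for j
  proof (induction j)
    case 0
    define i where "i = m - Suc 0"
    have i: "i < m" "Suc i = m" using 0 unfolding i_def by auto
    have "D!i < B!i" using swap2[OF i(1)] i by auto
    moreover then have "C!i < A!i" using swap1[OF i(1)] by auto
    ultimately show ?case unfolding i_def by simp
  next
    case (Suc j)
    define i where "i = m - Suc (Suc j)"
    have i: "i < m" "Suc i = m - Suc j" using Suc.prems unfolding i_def by auto
    have "C!(Suc i) < A!(Suc i)" using Suc i by simp
    then have "D!i < B!i" using swap2[OF i(1)] by auto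
    moreover then have "C!i < A!i" using swap1[OF i(1)] by auto
    ultimately show ?case unfolding i_def by simp
  qed
  have hC: "C!i < A!i" and hD: "D!i < B!i" if "i < m" for i
    using chain[of "m - Suc i"] that by (simp_all add: Suc_diff_Suc)
  define e where "e = merge C D"
  define N where "N = length C + length D"
  have N: "N = 2*m" unfolding N_def lC lD by simp
  have step: "\<forall>k. Suc k < N \<longrightarrow> e (Suc k) < e k"
  proof (intro allI impI)
    fix k assume k: "Suc k < N"
    show "e (Suc k) < e k"
    proof (cases "even k")
      case True
      then obtain q where q: "k = 2*q" by (rule evenE)
      have "q < m" using k q N by simp
      have "e (Suc k) = D!q" "e k = C!q" unfolding e_def q by simp_all
      then show ?thesis using hD[of q] F2[rule_format, of q] \<open>q < m\<close> by force
    next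
      case False
      then obtain q where "k = 2*q+1" by (rule oddE)
      then have q: "k = Suc (2*q)" by simp
      have "Suc q < m" using k q N by simp
      have "e (Suc k) = C!(Suc q)" "e k = D!q" unfolding e_def q by simp_all
      then show ?thesis using hC[of "Suc q"] F1[rule_format, of q] \<open>Suc q < m\<close> by force
    qed
  qed
  have lCD: "length D \<le> length C" "length C \<le> Suc (length D)" using lC lD by simp_all
  have disjCD: "set C \<inter> set D = {}" using merge_disj[OF step[unfolded e_def N_def] lCD] .
  have imgE: "e ` {..<N} = set C \<union> set D" unfolding e_def N_def using merge_image[OF lCD] .
  have e1: "e (Suc 0) = D!0" unfolding e_def using merge_odd[of C D 0] by simp
  have memL: "L = Z'" if L: "L \<in> D_Z Z Z' m m" for L
  proof -
    have LS: "L \<in> Sbar Z'" "defect L = 0" and BL: "Bplus m m Z L"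
      using L unfolding D_Z_def Dset_def BplusRel_def Sdef_def by auto
    obtain M where LM: "L = move (C,D) M" using LS(1) unfolding Sbar_def Z'd by auto
    define T where "T = fst L"
    define S where "S = snd L"
    have LTS: "L = (T,S)" unfolding T_def S_def by simp
    have dC: "distinct C" by (rule sorted_distinct[OF sC])
    have dD: "distinct D" by (rule sorted_distinct[OF sD])
    note mp = move_props[OF disjCD dC dD, of M, folded LM, folded T_def S_def]
    have lT: "length T = m" "length S = m"
      using mp(3) LS(2) lC lD unfolding LTS defect_def by simp_all
    from BL have G1: "\<forall>k<m. S!k < A!k \<and> A!(Suc k) \<le> S!k"
      and G2: "\<forall>k<m. (0<k \<longrightarrow> T!k < B!(k-1)) \<and> B!k \<le> T!k"
      unfolding Bplus_eq[OF refl] LTS Zd fst_conv snd_conv lT lA lB by auto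
    have inE: "\<exists>j<N. x = e j" if "x \<in> set T \<union> set S" for x
      using that mp(1) imgE by auto
    have T0: "T!0 = e 0" if "0 < length T"
    proof -
      have m0: "0 < m" using that lT by simp
      have "T!0 \<in> set T" using that by simp
      then obtain j where j: "j < N" "T!0 = e j" using inE[of "T!0"] by blast
      show ?thesis
      proof (cases "j = 0")
        case True then show ?thesis using j by simp
      next
        case False
        have "e j \<le> e (Suc 0)"
          using dec_from_step[OF step, of "Suc 0" j] j False by (cases "j = Suc 0") auto
        then have "T!0 \<le> D!0" using j e1 by simp
        moreover have "D!0 < B!0" using hD[OF m0] .
        moreover have "B!0 \<le> T!0" using G2 m0 by auto
        ultimately show ?thesis by simp
      qed
    qed
    have Ti: "\<forall>i. 0 < i \<and> i < length T \<longrightarrow> T!i = e (2*i - 1) \<or> T!i = e (2*i)"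
    proof (intro allI impI)
      fix i assume "0 < i \<and> i < length T"
      then obtain i' where ii: "i = Suc i'" "Suc i' < m" using lT by (cases i) auto
      have "T!i \<in> set T" using ii lT by simp
      then obtain j where j: "j < N" "T!i = e j" using inE[of "T!i"] by blast
      have "j = Suc (2*i') \<or> j = Suc (Suc (2*i'))"
      proof (rule window[OF step j(1), of "B!i" "B!i'"])
        show "B!i \<le> e j" using G2[rule_format, of i] ii j by auto
        show "e j < B!i'" using G2[rule_format, of i] ii j by auto
        show "0 < Suc (2*i') \<longrightarrow> B!i' \<le> e (Suc (2*i') - 1)" using F2[rule_format, of i'] ii unfolding e_def by simp
        show "Suc (2*i') < N" using ii N by simp
        show "Suc (Suc (Suc (2*i'))) < N \<longrightarrow> e (Suc (Suc (Suc (2*i')))) < B!i"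
          using hD[of "Suc i'"] ii N unfolding e_def by simp
      qed
      then show "T!i = e (2*i - 1) \<or> T!i = e (2*i)" using j ii by auto
    qed
    have Si: "\<forall>i<length S. S!i = e (2*i) \<or> S!i = e (Suc (2*i))"
    proof (intro allI impI)
      fix i assume ii: "i < length S"
      then have im: "i < m" using lT by simp
      have "S!i \<in> set S" using ii by simp
      then obtain j where j: "j < N" "S!i = e j" using inE[of "S!i"] by blast
      have "j = 2*i \<or> j = Suc (2*i)"
      proof (rule window[OF step j(1), of "A!(Suc i)" "A!i"])
        show "A!(Suc i) \<le> e j" using G1[rule_format, of i] im j by auto
        show "e j < A!i" using G1[rule_format, of i] im j by auto
        show "0 < 2*i \<longrightarrow> A!i \<le> e (2*i - 1)"
        proof
          assume "0 < 2*i"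
          then obtain i' where i': "i = Suc i'" by (cases i) auto
          then show "A!i \<le> e (2*i - 1)" using F1[rule_format, of i'] im unfolding e_def by simp
        qed
        show "2*i < N" using im N by simp
        show "Suc (Suc (2*i)) < N \<longrightarrow> e (Suc (Suc (2*i))) < A!(Suc i)"
          using hC[of "Suc i"] im N unfolding e_def by simp
      qed
      then show "S!i = e (2*i) \<or> S!i = e (Suc (2*i))" using j by auto
    qed
    have U: "(i < length T \<longrightarrow> T!i = e (2*i)) \<and> (i < length S \<longrightarrow> S!i = e (Suc (2*i)))" for i
      by (rule uniq[OF mp(2) _ _ T0 Ti Si]) (simp_all add: lT)
    have "T = C" by (rule nth_equalityI) (use U lT lC in \<open>simp_all add: e_def\<close>)
    moreover have "S = D" by (rule nth_equalityI) (use U lT lD in \<open>simp_all add: e_def\<close>)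
    ultimately show ?thesis using LTS Z'd by simp
  qed
  show ?thesis
  proof
    show "D_Z Z Z' m m \<subseteq> {Z'}" using memL by blast
    show "{Z'} \<subseteq> D_Z Z Z' m m" using mem unfolding D_Z_def by simp
  qed
qed


theorem lemma0805:
  fixes Z Z' :: symbol and m m' :: nat
  assumes "special1 Z m" and "special0 Z' m'" and "m' = m \<or> m' = m + 1"
  shows "(m' = m + 1 \<and> regular Z' \<and> D_Z Z Z' m m' = {Z'} \<longrightarrow> D_Z' Z Z' m m' = {Z})
       \<and> (m' = m \<and> regular Z \<and> D_Z' Z Z' m m' = {Z} \<longrightarrow> D_Z Z Z' m m' = {Z'})"
proof -
  obtain A B where Zd: "Z = (A,B)" by (cases Z)
  obtain C D where Z'd: "Z' = (C,D)" by (cases Z')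
  show ?thesis
  proof (intro conjI impI)
    assume h: "m' = m + 1 \<and> regular Z' \<and> D_Z Z Z' m m' = {Z'}"
    then have m': "m' = Suc m" by simp
    have s0: "special0 Z' (Suc m)" using assms(2) unfolding m' .
    have r: "regular Z'" using h by blast
    have d0: "D_Z Z Z' m m' = {Z'}" using h by blast
    have dz: "D_Z Z Z' m (Suc m) = {Z'}" using d0 unfolding m' .
    show "D_Z' Z Z' m m' = {Z}"
      unfolding m' by (rule part1[OF Zd Z'd assms(1) s0 r dz])
  next
    assume h: "m' = m \<and> regular Z \<and> D_Z' Z Z' m m' = {Z}"
    then have m': "m' = m" by simp
    have s0: "special0 Z' m" using assms(2) unfolding m' .
    have r: "regular Z" using h by blast
    have d0: "D_Z' Z Z' m m' = {Z}" using h by blast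
    have dz: "D_Z' Z Z' m m = {Z}" using d0 unfolding m' .
    show "D_Z Z Z' m m' = {Z'}"
      unfolding m' by (rule part2[OF Zd Z'd assms(1) s0 r dz])
  qed
qed

end
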